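(* Let $\pi,\tau\in\mathfrak{S}_m$ be non-overlapping permutations. If $\pi$ and $\tau$ are c-Wilf equivalent, then $\pi$ and $\tau$ are super-strongly c-Wilf equivalent.
   Context: The standardization $\operatorname{st}(w)$ of a word of distinct integers replaces its smallest entry by 1, the next smallest by 2, etc. For $\pi\in\mathfrak{S}_m$ and $\sigma\in\mathfrak{S}_n$, $\operatorname{Em}(\pi,\sigma)=\{i\in[n-m+1]:\operatorname{st}(\sigma_i\cdots\sigma_{i+m-1})=\pi\}$. For a set $S$ of positive integers, $a^\pi_{n,S}$ is the number of $\sigma\in\mathfrak{S}_n$ with $\operatorname{Em}(\pi,\sigma)=S$. $\pi,\tau$ are c-Wilf equivalent if $a^\pi_{n,\emptyset}=a^\tau_{n,\emptyset}$ for all $n$, and super-strongly c-Wilf equivalent if $a^\pi_{n,S}=a^\tau_{n,S}$ for all $n,S$. The overlap set is $\mathcal{O}_\pi=\{i\in[m-1]:\operatorname{st}(\pi_{i+1}\cdots\pi_m)=\operatorname{st}(\pi_1\cdots\pi_{m-i})\}$; $\pi$ is non-overlapping if $\mathcal{O}_\pi=\{m-1\}$. *)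

theory Defs
  imports "HOL-Combinatorics.Multiset_Permutations"
begin

definition Sym :: "nat \<Rightarrow> nat list set" where
  "Sym n = permutations_of_set {1..n}"

text \<open>Standardization of a word of distinct entries: each entry is replaced by its rank.\<close>
definition st :: "nat list \<Rightarrow> nat list" where
  "st w = map (\<lambda>x. card {y \<in> set w. y \<le> x}) w"

text \<open>Em(pi, sigma): positions i in [n-m+1] (1-based) where sigma_i..sigma_{i+m-1} standardizes to pi.\<close>
definition Em :: "nat list \<Rightarrow> nat list \<Rightarrow> nat set" where
  "Em p s = {i \<in> {1..length s + 1 - length p}. st (take (length p) (drop (i - 1) s)) = p}"

definition a_count :: "nat list \<Rightarrow> nat \<Rightarrow> nat set \<Rightarrow> nat" where
  "a_count p n S = card {s \<in> Sym n. Em p s = S}"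

definition c_Wilf_equiv :: "nat list \<Rightarrow> nat list \<Rightarrow> bool" where
  "c_Wilf_equiv p t \<longleftrightarrow> (\<forall>n. a_count p n {} = a_count t n {})"

definition super_strongly_c_Wilf_equiv :: "nat list \<Rightarrow> nat list \<Rightarrow> bool" where
  "super_strongly_c_Wilf_equiv p t \<longleftrightarrow> (\<forall>n S. a_count p n S = a_count t n S)"

definition overlap_set :: "nat list \<Rightarrow> nat set" where
  "overlap_set p = {i \<in> {1..length p - 1}. st (drop i p) = st (take (length p - i) p)}"

definition non_overlapping :: "nat list \<Rightarrow> bool" where
  "non_overlapping p \<longleftrightarrow> overlap_set p = {length p - 1}"

end

theory Submission
  imports Defs
begin

definition rk :: "nat list \<Rightarrow> nat \<Rightarrow> nat" where
  "rk w x = card {y \<in> set w. y \<le> x}"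

lemma st_rk: "st w = map (rk w) w"
  unfolding st_def rk_def by simp

lemma rk_smono: "strict_mono_on (set w) (rk w)"
proof (rule strict_mono_onI)
  fix x y assume xy: "x \<in> set w" "y \<in> set w" "x < y"
  have "y \<in> {z \<in> set w. z \<le> y}" "y \<notin> {z \<in> set w. z \<le> x}" using xy by auto
  moreover have "{z \<in> set w. z \<le> x} \<subseteq> {z \<in> set w. z \<le> y}"
    using xy by auto
  ultimately have "{z \<in> set w. z \<le> x} \<subset> {z \<in> set w. z \<le> y}"
    by blast
  then show "rk w x < rk w y" unfolding rk_def
    by (intro psubset_card_mono) auto
qed

lemma st_map_mono:
  assumes "strict_mono_on (set v) f"
  shows "st (map f v) = st v"
proof -
  have H: "card {y \<in> f ` set v. y \<le> f x} = card {y \<in> set v. y \<le> x}" if x: "x \<in> set v" for x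
  proof -
    have "{y \<in> f ` set v. y \<le> f x} = f ` {y \<in> set v. y \<le> x}"
      using x strict_mono_on_less_eq[OF assms] by auto
    moreover have "inj_on f {y \<in> set v. y \<le> x}"
      using strict_mono_on_imp_inj_on[OF assms] by (rule inj_on_subset) auto
    ultimately show ?thesis
      by (simp add: card_image)
  qed
  show ?thesis unfolding st_def by (simp add: H)
qed

lemma st_sub: "st (take k (drop j (st w))) = st (take k (drop j w))"
proof -
  have "take k (drop j (st w)) = map (rk w) (take k (drop j w))"
    by (simp add: st_rk take_map drop_map)
  moreover have "strict_mono_on (set (take k (drop j w))) (rk w)"
    using rk_smono[of w] by (rule monotone_on_subset) (meson in_set_dropD in_set_takeD subsetI)
  ultimately show ?thesis by (simp add: st_map_mono)
qed

lemma st_idem: "st (st w) = st w"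
proof -
  have "take (length w) (st w) = st w" by (simp add: st_rk)
  then show ?thesis using st_sub[of "length w" 0 w] by simp
qed

lemma Sym_D: "s \<in> Sym n \<Longrightarrow> distinct s \<and> set s = {1..n} \<and> length s = n"
  unfolding Sym_def permutations_of_set_def using distinct_card by fastforce

lemma card_Sym: "card (Sym n) = fact n"
  unfolding Sym_def by simp

lemma finite_Sym: "finite (Sym n)"
  unfolding Sym_def by simp

lemma rk_range:
  assumes "set w = A" "finite A"
  shows "rk w ` A = {1..card A}"
proof -
  have "rk w ` A \<subseteq> {1..card A}"
  proof
    fix z assume "z \<in> rk w ` A"
    then obtain x where x: "x \<in> A" "z = rk w x" by auto
    have "x \<in> {y \<in> set w. y \<le> x}" using x assms by auto
    then have "1 \<le> z" unfolding x rk_def using assms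
      by (metis (no_types, lifting) One_nat_def Suc_leI card_gt_0_iff empty_iff finite_subset mem_Collect_eq subsetI)
    moreover have "z \<le> card A" unfolding x rk_def using assms
      by (intro card_mono) auto
    ultimately show "z \<in> {1..card A}" by auto
  qed
  moreover have "card (rk w ` A) = card A"
    using strict_mono_on_imp_inj_on[OF rk_smono[of w]] assms by (simp add: card_image)
  ultimately show ?thesis by (intro card_subset_eq) auto
qed

lemma st_perm:
  assumes "finite A" "\<alpha> \<in> permutations_of_set A"
  shows "st \<alpha> \<in> Sym (card A)"
proof -
  have a: "set \<alpha> = A" "distinct \<alpha>" using assms permutations_of_setD by auto
  have "set (st \<alpha>) = {1..card A}" using rk_range[OF a(1) assms(1)] a by (simp add: st_rk)
  moreover have "distinct (st \<alpha>)" using a strict_mono_on_imp_inj_on[OF rk_smono[of \<alpha>]]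
    by (simp add: st_rk distinct_map)
  ultimately show ?thesis unfolding Sym_def by auto
qed

lemma st_inj:
  "inj_on st (permutations_of_set A)"
proof
  fix \<alpha> \<beta> assume ab: "\<alpha> \<in> permutations_of_set A" "\<beta> \<in> permutations_of_set A" "st \<alpha> = st \<beta>"
  have s: "set \<alpha> = A" "set \<beta> = A" using ab permutations_of_setD by auto
  then have "rk \<alpha> = rk \<beta>" unfolding rk_def by (auto simp: fun_eq_iff)
  then have "map (rk \<alpha>) \<alpha> = map (rk \<alpha>) \<beta>" using ab(3) by (simp add: st_rk)
  moreover have "inj_on (rk \<alpha>) (set \<alpha> \<union> set \<beta>)"
    using strict_mono_on_imp_inj_on[OF rk_smono[of \<alpha>]] s by simp
  ultimately show "\<alpha> = \<beta>" using inj_on_map_eq_map by blast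
qed

lemma st_image:
  assumes "finite A"
  shows "st ` permutations_of_set A = Sym (card A)"
proof (rule card_subset_eq)
  show "finite (Sym (card A))" by (rule finite_Sym)
  show "st ` permutations_of_set A \<subseteq> Sym (card A)" using st_perm assms by auto
  show "card (st ` permutations_of_set A) = card (Sym (card A))"
    using st_inj assms by (simp add: card_image card_Sym)
qed

lemma count_st:
  assumes "finite A" "X \<subseteq> Sym (card A)"
  shows "card {\<alpha> \<in> permutations_of_set A. st \<alpha> \<in> X} = card X"
proof -
  have "st ` {\<alpha> \<in> permutations_of_set A. st \<alpha> \<in> X} = X"
  proof (rule equalityI)
    show "X \<subseteq> st ` {\<alpha> \<in> permutations_of_set A. st \<alpha> \<in> X}"
    proof
      fix x assume x: "x \<in> X"
      then have "x \<in> st ` permutations_of_set A" using st_image[OF assms(1)] assms(2) by blast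
      then obtain \<alpha> where "\<alpha> \<in> permutations_of_set A" "x = st \<alpha>" by blast
      then show "x \<in> st ` {\<alpha> \<in> permutations_of_set A. st \<alpha> \<in> X}" using x by blast
    qed
  qed auto
  moreover have "inj_on st {\<alpha> \<in> permutations_of_set A. st \<alpha> \<in> X}"
    using st_inj by (rule inj_on_subset) auto
  ultimately show ?thesis using card_image by fastforce
qed

lemma perm_len: "\<alpha> \<in> permutations_of_set A \<Longrightarrow> length \<alpha> = card A"
  using permutations_of_setD distinct_card by metis

lemma split_count:
  assumes pn: "p \<le> n" and X: "X \<subseteq> Sym p" and Y: "Y \<subseteq> Sym (n-p)"
  shows "card {\<sigma> \<in> Sym n. st (take p \<sigma>) \<in> X \<and> st (drop p \<sigma>) \<in> Y} = (n choose p) * card X * card Y"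
proof -
  define AA where "AA = {A. A \<subseteq> {1..n} \<and> card A = p}"
  define F where "F A = (\<lambda>(\<alpha>,\<beta>). \<alpha> @ \<beta>) ` ({\<alpha> \<in> permutations_of_set A. st \<alpha> \<in> X} \<times> {\<beta> \<in> permutations_of_set ({1..n} - A). st \<beta> \<in> Y})" for A
  have eq: "{\<sigma> \<in> Sym n. st (take p \<sigma>) \<in> X \<and> st (drop p \<sigma>) \<in> Y} = \<Union> (F ` AA)"
  proof (rule equalityI)
    show "{\<sigma> \<in> Sym n. st (take p \<sigma>) \<in> X \<and> st (drop p \<sigma>) \<in> Y} \<subseteq> \<Union> (F ` AA)"
    proof
      fix \<sigma> assume s: "\<sigma> \<in> {\<sigma> \<in> Sym n. st (take p \<sigma>) \<in> X \<and> st (drop p \<sigma>) \<in> Y}"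
      then have d: "distinct \<sigma>" "set \<sigma> = {1..n}" "length \<sigma> = n" using Sym_D by auto
      define A where "A = set (take p \<sigma>)"
      have "card A = p" unfolding A_def using d pn by (simp add: distinct_card)
      moreover have "A \<subseteq> {1..n}" unfolding A_def using d set_take_subset by metis
      ultimately have A: "A \<in> AA" unfolding AA_def by auto
      have dd: "distinct (take p \<sigma> @ drop p \<sigma>)" using d by simp
      have "set (take p \<sigma>) \<union> set (drop p \<sigma>) = {1..n}" using d
        by (metis append_take_drop_id set_append)
      then have sd: "set (drop p \<sigma>) = {1..n} - A" unfolding A_def using dd
        by (auto simp del: append_take_drop_id)
      have "take p \<sigma> \<in> {\<alpha> \<in> permutations_of_set A. st \<alpha> \<in> X}"
        using s d unfolding A_def by auto
      moreover have "drop p \<sigma> \<in> {\<beta> \<in> permutations_of_set ({1..n} - A). st \<beta> \<in> Y}"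
        using s d sd by auto
      ultimately have "\<sigma> \<in> F A" unfolding F_def
        by (metis (no_types, lifting) SigmaI append_take_drop_id case_prod_conv image_eqI)
      then show "\<sigma> \<in> \<Union> (F ` AA)" using A by blast
    qed
  next
    show "\<Union> (F ` AA) \<subseteq> {\<sigma> \<in> Sym n. st (take p \<sigma>) \<in> X \<and> st (drop p \<sigma>) \<in> Y}"
    proof
      fix \<sigma> assume "\<sigma> \<in> \<Union> (F ` AA)"
      then obtain A \<alpha> \<beta> where A: "A \<in> AA" and s: "\<sigma> = \<alpha> @ \<beta>"
        and a: "\<alpha> \<in> permutations_of_set A" "st \<alpha> \<in> X"
        and b: "\<beta> \<in> permutations_of_set ({1..n} - A)" "st \<beta> \<in> Y"
        unfolding F_def by auto
      have la: "length \<alpha> = p" using perm_len[OF a(1)] A unfolding AA_def by auto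
      have ss: "set \<alpha> = A" "set \<beta> = {1..n} - A" "distinct \<alpha>" "distinct \<beta>"
        using a(1) b(1) permutations_of_setD by auto
      have "set \<sigma> = {1..n}" "distinct \<sigma>" using A ss unfolding AA_def s by auto
      then have "\<sigma> \<in> Sym n" unfolding Sym_def by auto
      then show "\<sigma> \<in> {\<sigma> \<in> Sym n. st (take p \<sigma>) \<in> X \<and> st (drop p \<sigma>) \<in> Y}"
        using a b la s by auto
    qed
  qed
  have cF: "card (F A) = card X * card Y" if A: "A \<in> AA" for A
  proof -
    have inj: "inj_on (\<lambda>(\<alpha>,\<beta>). \<alpha> @ \<beta>) ({\<alpha> \<in> permutations_of_set A. st \<alpha> \<in> X} \<times> {\<beta> \<in> permutations_of_set ({1..n} - A). st \<beta> \<in> Y})"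
    proof (rule inj_onI, clarify)
      fix a b a' b' assume h: "a \<in> permutations_of_set A" "a' \<in> permutations_of_set A" "a @ b = a' @ b'"
      then have "length a = length a'" using perm_len by metis
      then show "a = a' \<and> b = b'" using h(3) by simp
    qed
    have fA: "finite A" "card A = p" using A unfolding AA_def by (auto intro: finite_subset)
    have "card ({1..n} - A) = n - p" using A unfolding AA_def by (simp add: card_Diff_subset fA(1))
    then have "card {\<beta> \<in> permutations_of_set ({1..n} - A). st \<beta> \<in> Y} = card Y"
      using count_st[of "{1..n} - A" Y] Y by simp
    moreover have "card {\<alpha> \<in> permutations_of_set A. st \<alpha> \<in> X} = card X"
      using count_st[of A X] X fA by simp
    ultimately show ?thesis unfolding F_def using inj by (simp add: card_image card_cartesian_product)
  qed
  have "card (\<Union> (F ` AA)) = (\<Sum>A\<in>AA. card (F A))"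
  proof (rule card_UN_disjoint)
    show "finite AA" unfolding AA_def by (rule finite_subset[of _ "Pow {1..n}"]) auto
    show "\<forall>i\<in>AA. finite (F i)" unfolding F_def by auto
    show "\<forall>i\<in>AA. \<forall>j\<in>AA. i \<noteq> j \<longrightarrow> F i \<inter> F j = {}"
    proof (intro ballI impI)
      fix i j assume ij: "i \<in> AA" "j \<in> AA" "i \<noteq> j"
      have key: "set (take p x) = k" if "k \<in> AA" "x \<in> F k" for k x
      proof -
        from that obtain \<alpha> \<beta> where "x = \<alpha> @ \<beta>" "\<alpha> \<in> permutations_of_set k"
          unfolding F_def by auto
        moreover have "length \<alpha> = p" using perm_len[OF calculation(2)] that unfolding AA_def by auto
        ultimately show ?thesis using permutations_of_setD by auto
      qed
      show "F i \<inter> F j = {}" using key ij by blast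
    qed
  qed
  also have "\<dots> = card AA * (card X * card Y)" using cF by simp
  also have "card AA = n choose p" unfolding AA_def using n_subsets[of "{1..n}" p] by simp
  finally show ?thesis using eq by (simp add: mult.assoc)
qed

definition bc :: "nat list \<Rightarrow> nat \<Rightarrow> nat set \<Rightarrow> nat" where
  "bc p n T = card {s \<in> Sym n. T \<subseteq> Em p s}"

lemma Em_iff: "i \<in> Em p s \<longleftrightarrow> 1 \<le> i \<and> i \<le> length s + 1 - length p \<and> st (take (length p) (drop (i-1) s)) = p"
  unfolding Em_def by auto

lemma length_st [simp]: "length (st w) = length w"
  unfolding st_def by simp

lemma em_left:
  assumes "length \<sigma> = n" "p \<le> n" "1 \<le> i" "i + length \<pi> - 1 \<le> p" "1 \<le> length \<pi>"
  shows "i \<in> Em \<pi> \<sigma> \<longleftrightarrow> i \<in> Em \<pi> (st (take p \<sigma>))"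
proof -
  have "length \<pi> \<le> p - (i - 1)" using assms by arith
  then have "take (length \<pi>) (drop (i-1) (take p \<sigma>)) = take (length \<pi>) (drop (i-1) \<sigma>)"
    by (simp add: drop_take min_def)
  then have "st (take (length \<pi>) (drop (i-1) (st (take p \<sigma>)))) = st (take (length \<pi>) (drop (i-1) \<sigma>))"
    by (simp add: st_sub)
  then show ?thesis using assms unfolding Em_iff by auto
qed

lemma em_right:
  assumes "length \<sigma> = n" "p \<le> n" "p < i"
  shows "i \<in> Em \<pi> \<sigma> \<longleftrightarrow> i - p \<in> Em \<pi> (st (drop p \<sigma>))"
proof -
  have "drop (i - p - 1) (drop p \<sigma>) = drop (i - 1) \<sigma>"
    using assms by simp
  then have w: "st (take (length \<pi>) (drop (i-p-1) (st (drop p \<sigma>)))) = st (take (length \<pi>) (drop (i-1) \<sigma>))"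
    by (simp add: st_sub)
  have b: "i \<le> n + 1 - length \<pi> \<longleftrightarrow> i - p \<le> n - p + 1 - length \<pi>" using assms by linarith
  have c: "1 \<le> i" "1 \<le> i - p" using assms by linarith+
  have d: "length (st (drop p \<sigma>)) = n - p" using assms by simp
  show ?thesis unfolding Em_iff d using w b c assms(1) by simp
qed

lemma st_take_Sym:
  assumes "\<sigma> \<in> Sym n" "p \<le> n"
  shows "st (take p \<sigma>) \<in> Sym p" "st (drop p \<sigma>) \<in> Sym (n - p)"
proof -
  have d: "distinct \<sigma>" "length \<sigma> = n" using Sym_D[OF assms(1)] by auto
  have "take p \<sigma> \<in> permutations_of_set (set (take p \<sigma>))" using d(1) by (intro permutations_of_setI) auto
  then have "st (take p \<sigma>) \<in> Sym (card (set (take p \<sigma>)))" by (intro st_perm) auto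
  moreover have "card (set (take p \<sigma>)) = p" using d assms(2) by (simp add: distinct_card)
  ultimately show "st (take p \<sigma>) \<in> Sym p" by simp
  have "drop p \<sigma> \<in> permutations_of_set (set (drop p \<sigma>))" using d(1) by (intro permutations_of_setI) auto
  then have "st (drop p \<sigma>) \<in> Sym (card (set (drop p \<sigma>)))" by (intro st_perm) auto
  moreover have "card (set (drop p \<sigma>)) = n - p" using d by (simp add: distinct_card)
  ultimately show "st (drop p \<sigma>) \<in> Sym (n - p)" by simp
qed

lemma bc_cut:
  assumes p: "0 < p" "p < n" and TU: "T \<subseteq> {1..n+1-length \<pi>}"
    and cut: "\<forall>i\<in>T. i + length \<pi> - 1 \<le> p \<or> p < i" and m1: "1 \<le> length \<pi>"
  shows "bc \<pi> n T = (n choose p) * bc \<pi> p {i\<in>T. i \<le> p} * bc \<pi> (n-p) ((\<lambda>i. i-p) ` {i\<in>T. p<i})"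
proof -
  define X where "X = {\<alpha> \<in> Sym p. {i\<in>T. i \<le> p} \<subseteq> Em \<pi> \<alpha>}"
  define Y where "Y = {\<beta> \<in> Sym (n-p). (\<lambda>i. i-p) ` {i\<in>T. p<i} \<subseteq> Em \<pi> \<beta>}"
  have eq: "{s \<in> Sym n. T \<subseteq> Em \<pi> s} = {\<sigma> \<in> Sym n. st (take p \<sigma>) \<in> X \<and> st (drop p \<sigma>) \<in> Y}"
  proof (rule Collect_cong, rule conj_cong[OF refl])
    fix \<sigma> assume s: "\<sigma> \<in> Sym n"
    have l: "length \<sigma> = n" using Sym_D[OF s] by auto
    have L: "i \<in> Em \<pi> \<sigma> \<longleftrightarrow> i \<in> Em \<pi> (st (take p \<sigma>))" if "i \<in> T" "i \<le> p" for i
      using em_left[OF l, of p i \<pi>] that cut TU p m1 by fastforce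
    have R: "i \<in> Em \<pi> \<sigma> \<longleftrightarrow> i - p \<in> Em \<pi> (st (drop p \<sigma>))" if "i \<in> T" "p < i" for i
      using em_right[OF l, of p i \<pi>] that p by auto
    have "T \<subseteq> Em \<pi> \<sigma> \<longleftrightarrow> {i\<in>T. i \<le> p} \<subseteq> Em \<pi> (st (take p \<sigma>)) \<and> (\<lambda>i. i-p) ` {i\<in>T. p<i} \<subseteq> Em \<pi> (st (drop p \<sigma>))"
    proof
      assume "T \<subseteq> Em \<pi> \<sigma>" then show "{i\<in>T. i \<le> p} \<subseteq> Em \<pi> (st (take p \<sigma>)) \<and> (\<lambda>i. i-p) ` {i\<in>T. p<i} \<subseteq> Em \<pi> (st (drop p \<sigma>))"
        using L R by auto
    next
      assume h: "{i\<in>T. i \<le> p} \<subseteq> Em \<pi> (st (take p \<sigma>)) \<and> (\<lambda>i. i-p) ` {i\<in>T. p<i} \<subseteq> Em \<pi> (st (drop p \<sigma>))"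
      show "T \<subseteq> Em \<pi> \<sigma>"
      proof
        fix i assume i: "i \<in> T"
        show "i \<in> Em \<pi> \<sigma>"
        proof (cases "i \<le> p")
          case True then show ?thesis using L i h by auto
        next
          case False then show ?thesis using R i h by auto
        qed
      qed
    qed
    then show "(T \<subseteq> Em \<pi> \<sigma>) = (st (take p \<sigma>) \<in> X \<and> st (drop p \<sigma>) \<in> Y)"
      unfolding X_def Y_def using st_take_Sym[OF s] p by auto
  qed
  have "card {\<sigma> \<in> Sym n. st (take p \<sigma>) \<in> X \<and> st (drop p \<sigma>) \<in> Y} = (n choose p) * card X * card Y"
    by (rule split_count) (use p in \<open>auto simp: X_def Y_def\<close>)
  then show ?thesis unfolding bc_def eq X_def Y_def by simp
qed

lemma overlap_bad:
  assumes no: "non_overlapping \<pi>" and T: "i \<in> T" "j \<in> T" "i < j" "j - i < length \<pi> - 1"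
  shows "bc \<pi> n T = 0"
proof -
  define m where "m = length \<pi>"
  have "\<not> (T \<subseteq> Em \<pi> \<sigma>)" if s: "\<sigma> \<in> Sym n" for \<sigma>
  proof
    assume "T \<subseteq> Em \<pi> \<sigma>"
    then have ij: "i \<in> Em \<pi> \<sigma>" "j \<in> Em \<pi> \<sigma>" using T by auto
    define d where "d = j - i"
    define Wi where "Wi = take m (drop (i-1) \<sigma>)"
    define Wj where "Wj = take m (drop (j-1) \<sigma>)"
    have Wi: "st Wi = \<pi>" and Wj: "st Wj = \<pi>" using ij unfolding Wi_def Wj_def m_def Em_iff by auto
    have jb: "1 \<le> i" "j \<le> length \<sigma> + 1 - m" using ij unfolding Em_iff m_def by auto
    have e1: "drop d Wi = take (m - d) (drop (j-1) \<sigma>)"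
      unfolding Wi_def d_def using T jb by (simp add: drop_take)
    have e2: "take (m - d) Wj = take (m - d) (drop (j-1) \<sigma>)"
      unfolding Wj_def by (simp add: min_def)
    have "st (drop d \<pi>) = st (take (m - d) (drop d \<pi>))" by (simp add: m_def)
    also have "\<dots> = st (take (m - d) (drop d Wi))" using st_sub[of "m-d" d Wi] Wi by simp
    also have "\<dots> = st (take (m - d) Wj)" using e1 e2 by simp
    also have "\<dots> = st (take (m - d) \<pi>)" using st_sub[of "m-d" 0 Wj] Wj by simp
    finally have "d \<in> overlap_set \<pi>" unfolding overlap_set_def m_def d_def using T by auto
    then show False using no T unfolding non_overlapping_def d_def by auto
  qed
  then have E: "{s \<in> Sym n. T \<subseteq> Em \<pi> s} = {}" by blast
  show ?thesis unfolding bc_def E by simp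
qed

definition Tstar :: "nat \<Rightarrow> nat \<Rightarrow> nat set" where
  "Tstar m n = {i \<in> {1..n+1-m}. (m-1) dvd (i-1)}"

lemma uncut:
  assumes m2: "2 \<le> m" and TU: "T \<subseteq> {1..n+1-m}" and ne: "T \<noteq> {}"
    and valid: "\<forall>i\<in>T. \<forall>j\<in>T. i < j \<longrightarrow> m - 1 \<le> j - i"
    and nocut: "\<not> (\<exists>p. 0 < p \<and> p < n \<and> (\<forall>i\<in>T. i + m - 1 \<le> p \<or> p < i))"
  shows "T = Tstar m n"
proof -
  have down: "m \<le> i \<and> i - (m-1) \<in> T" if i: "i \<in> T" "2 \<le> i" for i
  proof -
    have "i \<le> n + 1 - m" using i TU by auto
    then have "0 < i - 1 \<and> i - 1 < n" using i m2 by auto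
    moreover have "\<not> (0 < i - 1 \<and> i - 1 < n \<and> (\<forall>t\<in>T. t + m - 1 \<le> i - 1 \<or> i - 1 < t))"
      using nocut by (rule contrapos_nn) (rule exI)
    ultimately obtain t where t: "t \<in> T" "\<not> (t + m - 1 \<le> i - 1)" "\<not> (i - 1 < t)" by blast
    have "m - 1 \<le> i - t" using valid t i by auto
    moreover have "1 \<le> t" using t TU by auto
    ultimately have "t = i - (m-1)" "m \<le> i" using t m2 by auto
    then show ?thesis using t by auto
  qed
  have up: "i + (m-1) \<in> T" if i: "i \<in> T" "i + (m-1) \<le> n + 1 - m" for i
  proof -
    have "0 < i + m - 1 \<and> i + m - 1 < n" using i m2 by auto
    moreover have "\<not> (0 < i + m - 1 \<and> i + m - 1 < n \<and> (\<forall>t\<in>T. t + m - 1 \<le> i + m - 1 \<or> i + m - 1 < t))"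
      using nocut by (rule contrapos_nn) (rule exI)
    ultimately obtain t where t: "t \<in> T" "\<not> (t + m - 1 \<le> i + m - 1)" "\<not> (i + m - 1 < t)" by blast
    have "m - 1 \<le> t - i" using valid t i by auto
    then have "t = i + (m-1)" using t m2 by auto
    then show ?thesis using t by auto
  qed
  have one: "i \<in> T \<longrightarrow> 1 \<in> T" for i
  proof (induction i rule: less_induct)
    case (less i)
    show ?case
    proof
      assume iT: "i \<in> T"
      then have "1 \<le> i" using TU by auto
      show "1 \<in> T"
      proof (cases "i = 1")
        case True then show ?thesis using iT by simp
      next
        case False
        then have "m \<le> i \<and> i - (m-1) \<in> T" using down iT \<open>1 \<le> i\<close> by auto
        moreover have "i - (m-1) < i" using m2 calculation by auto
        ultimately show ?thesis using less by blast
      qed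
    qed
  qed
  from ne obtain i0 where "i0 \<in> T" by auto
  then have oneT: "1 \<in> T" using one by blast
  have dv: "i \<in> T \<longrightarrow> (m-1) dvd (i-1)" for i
  proof (induction i rule: less_induct)
    case (less i)
    show ?case
    proof
      assume iT: "i \<in> T"
      then have "1 \<le> i" using TU by auto
      show "(m-1) dvd (i-1)"
      proof (cases "i = 1")
        case True then show ?thesis by simp
      next
        case False
        then have h: "m \<le> i \<and> i - (m-1) \<in> T" using down iT \<open>1 \<le> i\<close> by auto
        moreover have "i - (m-1) < i" using m2 calculation by auto
        ultimately have "(m-1) dvd (i - (m-1) - 1)" using less by blast
        moreover have "i - 1 = (i - (m-1) - 1) + (m-1)" using h m2 by auto
        ultimately show ?thesis by simp
      qed
    qed
  qed
  have allk: "1 + (m-1)*k \<le> n + 1 - m \<longrightarrow> 1 + (m-1)*k \<in> T" for k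
  proof (induction k)
    case 0 then show ?case using oneT by simp
  next
    case (Suc k)
    show ?case
    proof
      assume h: "1 + (m-1) * Suc k \<le> n + 1 - m"
      then have "1 + (m-1)*k \<le> n + 1 - m" by auto
      then have "1 + (m-1)*k \<in> T" using Suc by blast
      moreover have "(m-1) * Suc k = (m-1)*k + (m-1)" by simp
      then have "1 + (m-1)*k + (m-1) \<le> n + 1 - m" using h by linarith
      ultimately have "1 + (m-1)*k + (m-1) \<in> T" using up by blast
      then show "1 + (m-1) * Suc k \<in> T" using \<open>(m-1) * Suc k = (m-1)*k + (m-1)\<close> by (metis add.assoc)
    qed
  qed
  show ?thesis
  proof
    show "T \<subseteq> Tstar m n" using TU dv unfolding Tstar_def by auto
    show "Tstar m n \<subseteq> T"
    proof
      fix i assume "i \<in> Tstar m n"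
      then have i: "1 \<le> i" "i \<le> n + 1 - m" "(m-1) dvd (i-1)" unfolding Tstar_def by auto
      then obtain k where "i - 1 = (m-1)*k" by blast
      then have "i = 1 + (m-1)*k" using i by auto
      then show "i \<in> T" using allk i by auto
    qed
  qed
qed

lemma Em_sub: "s \<in> Sym n \<Longrightarrow> Em p s \<subseteq> {1..n+1-length p}"
  using Sym_D unfolding Em_def by auto

lemma bc_out: "\<not> T \<subseteq> {1..n+1-length p} \<Longrightarrow> bc p n T = 0"
proof -
  assume h: "\<not> T \<subseteq> {1..n+1-length p}"
  have E: "{s \<in> Sym n. T \<subseteq> Em p s} = {}" using Em_sub h by blast
  show ?thesis unfolding bc_def E by simp
qed

lemma a_out: "\<not> S \<subseteq> {1..n+1-length p} \<Longrightarrow> a_count p n S = 0"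
proof -
  assume h: "\<not> S \<subseteq> {1..n+1-length p}"
  have E: "{s \<in> Sym n. Em p s = S} = {}" using Em_sub h by blast
  show ?thesis unfolding a_count_def E by simp
qed

lemma bc_empty: "bc p n {} = fact n"
  unfolding bc_def by (simp add: card_Sym)

lemma bc_sum:
  assumes X: "X \<subseteq> {1..n+1-length p}"
  shows "bc p n ({1..n+1-length p} - X) = (\<Sum>Y\<in>Pow X. a_count p n ({1..n+1-length p} - Y))"
proof -
  define U where "U = {1..n+1-length p}"
  have eq: "{s \<in> Sym n. U - X \<subseteq> Em p s} = (\<Union>Y\<in>Pow X. {s \<in> Sym n. Em p s = U - Y})"
  proof (rule equalityI)
    show "{s \<in> Sym n. U - X \<subseteq> Em p s} \<subseteq> (\<Union>Y\<in>Pow X. {s \<in> Sym n. Em p s = U - Y})"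
    proof
      fix s assume s: "s \<in> {s \<in> Sym n. U - X \<subseteq> Em p s}"
      then have "Em p s \<subseteq> U" using Em_sub unfolding U_def by auto
      then have "Em p s = U - (U - Em p s)" "U - Em p s \<in> Pow X" using s by auto
      then show "s \<in> (\<Union>Y\<in>Pow X. {s \<in> Sym n. Em p s = U - Y})" using s by blast
    qed
  qed auto
  have "card (\<Union>Y\<in>Pow X. {s \<in> Sym n. Em p s = U - Y}) = (\<Sum>Y\<in>Pow X. card {s \<in> Sym n. Em p s = U - Y})"
  proof (rule card_UN_disjoint)
    show "finite (Pow X)" using X finite_subset by (auto simp: U_def)
    show "\<forall>i\<in>Pow X. finite {s \<in> Sym n. Em p s = U - i}" using finite_Sym by auto
    show "\<forall>i\<in>Pow X. \<forall>j\<in>Pow X. i \<noteq> j \<longrightarrow> {s \<in> Sym n. Em p s = U - i} \<inter> {s \<in> Sym n. Em p s = U - j} = {}"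
      using X unfolding U_def by blast
  qed
  then show ?thesis unfolding bc_def a_count_def eq[unfolded U_def] U_def by simp
qed

lemma mobius:
  assumes S: "S \<subseteq> {1..n+1-length p}"
  shows "int (a_count p n ({1..n+1-length p} - S)) =
    (\<Sum>T\<in>Pow S. (-1) ^ (card S - card T) * int (bc p n ({1..n+1-length p} - T)))"
proof -
  define U where "U = {1..n+1-length p}"
  define f where "f Y = int (a_count p n (U - Y))" for Y
  have fS: "finite S" using S finite_subset by auto
  have "f S = (\<Sum>T\<in>Pow S. (-1) ^ (card S - card T) * sum f (Pow T))"
    by (rule inclusion_exclusion_mobius[OF _ fS]) simp
  also have "\<dots> = (\<Sum>T\<in>Pow S. (-1) ^ (card S - card T) * int (bc p n (U - T)))"
  proof (rule sum.cong[OF refl])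
    fix T assume "T \<in> Pow S"
    then have "T \<subseteq> U" using S unfolding U_def by auto
    then show "(-1) ^ (card S - card T) * sum f (Pow T) = (-1) ^ (card S - card T) * int (bc p n (U - T))"
      using bc_sum[of T n p] unfolding f_def U_def by (simp add: of_nat_sum)
  qed
  finally show ?thesis unfolding f_def U_def .
qed

lemma m_ge2: "non_overlapping \<pi> \<Longrightarrow> 2 \<le> length \<pi>"
proof (rule ccontr)
  assume no: "non_overlapping \<pi>" and "\<not> 2 \<le> length \<pi>"
  then have "{1..length \<pi> - 1} = {}" by auto
  then have "overlap_set \<pi> = {}" unfolding overlap_set_def by auto
  then show False using no unfolding non_overlapping_def by auto
qed

lemma main_bc:
  assumes np: "non_overlapping \<pi>" and nt: "non_overlapping \<tau>" and len: "length \<tau> = length \<pi>"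
    and cw: "c_Wilf_equiv \<pi> \<tau>"
  shows "bc \<pi> n T = bc \<tau> n T"
proof (induction n arbitrary: T rule: less_induct)
  case (less n)
  define m where "m = length \<pi>"
  have m2: "2 \<le> m" using m_ge2[OF np] unfolding m_def .
  define U where "U = {1..n+1-m}"
  have H: "bc \<pi> n T = bc \<tau> n T" if nT: "T \<noteq> Tstar m n" for T
  proof (cases "T \<subseteq> U")
    case False then show ?thesis using bc_out[of T n \<pi>] bc_out[of T n \<tau>] len unfolding U_def m_def by simp
  next
    case TU: True
    show ?thesis
    proof (cases "\<exists>i\<in>T. \<exists>j\<in>T. i < j \<and> j - i < m - 1")
      case True
      then obtain i j where "i \<in> T" "j \<in> T" "i < j" "j - i < m - 1" by blast
      then show ?thesis using overlap_bad[OF np, of i T j n] overlap_bad[OF nt, of i T j n] len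
        unfolding m_def by simp
    next
      case valid0: False
      have valid: "\<forall>i\<in>T. \<forall>j\<in>T. i < j \<longrightarrow> m - 1 \<le> j - i" using valid0 by (meson not_le)
      show ?thesis
      proof (cases "T = {}")
        case True then show ?thesis by (simp add: bc_empty)
      next
        case ne: False
        show ?thesis
        proof (cases "\<exists>p. 0 < p \<and> p < n \<and> (\<forall>i\<in>T. i + m - 1 \<le> p \<or> p < i)")
          case True
          then obtain p where p: "0 < p" "p < n" "\<forall>i\<in>T. i + m - 1 \<le> p \<or> p < i" by blast
          have "bc \<pi> n T = (n choose p) * bc \<pi> p {i\<in>T. i \<le> p} * bc \<pi> (n-p) ((\<lambda>i. i-p) ` {i\<in>T. p<i})"
            by (rule bc_cut) (use p TU m2 in \<open>auto simp: U_def m_def\<close>)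
          moreover have "bc \<tau> n T = (n choose p) * bc \<tau> p {i\<in>T. i \<le> p} * bc \<tau> (n-p) ((\<lambda>i. i-p) ` {i\<in>T. p<i})"
            by (rule bc_cut) (use p TU m2 len in \<open>auto simp: U_def m_def\<close>)
          moreover have "bc \<pi> p {i\<in>T. i \<le> p} = bc \<tau> p {i\<in>T. i \<le> p}" using less p by auto
          moreover have "bc \<pi> (n-p) ((\<lambda>i. i-p) ` {i\<in>T. p<i}) = bc \<tau> (n-p) ((\<lambda>i. i-p) ` {i\<in>T. p<i})"
            using less p by auto
          ultimately show ?thesis by simp
        next
          case False
          then have "T = Tstar m n" using uncut[OF m2 _ ne valid] TU unfolding U_def by blast
          then show ?thesis using nT by simp
        qed
      qed
    qed
  qed
  show ?case
  proof (cases "T = Tstar m n")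
    case False then show ?thesis using H by simp
  next
    case True
    have UU: "U \<subseteq> {1..n+1-length \<pi>}" "U \<subseteq> {1..n+1-length \<tau>}" using len unfolding U_def m_def by auto
    define c where "c (X::nat set) = ((-1::int) ^ (card U - card X))" for X
    define Fp where "Fp p = (\<Sum>T\<in>Pow U. c T * int (bc p n (U - T)))" for p
    have "int (a_count \<pi> n (U - U)) = Fp \<pi>"
      using mobius[OF UU(1)] unfolding Fp_def c_def U_def m_def by simp
    moreover have "int (a_count \<tau> n (U - U)) = Fp \<tau>"
      using mobius[OF UU(2)] len unfolding Fp_def c_def U_def m_def by simp
    moreover have "a_count \<pi> n {} = a_count \<tau> n {}" using cw unfolding c_Wilf_equiv_def by blast
    ultimately have F: "Fp \<pi> = Fp \<tau>" by simp
    define T0 where "T0 = U - Tstar m n"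
    have ts: "Tstar m n \<subseteq> U" unfolding Tstar_def U_def by auto
    have T0: "T0 \<in> Pow U" "U - T0 = Tstar m n" unfolding T0_def using ts by auto
    have fin: "finite (Pow U)" unfolding U_def by simp
    have split: "Fp p = c T0 * int (bc p n (Tstar m n)) + (\<Sum>T\<in>Pow U - {T0}. c T * int (bc p n (U - T)))" for p
      unfolding Fp_def using sum.remove[OF fin T0(1), of "\<lambda>T. c T * int (bc p n (U - T))"] T0(2) by simp
    have rest: "(\<Sum>T\<in>Pow U - {T0}. c T * int (bc \<pi> n (U - T))) = (\<Sum>T\<in>Pow U - {T0}. c T * int (bc \<tau> n (U - T)))"
    proof (rule sum.cong[OF refl])
      fix T assume "T \<in> Pow U - {T0}"
      then have "U - T \<noteq> Tstar m n" unfolding T0_def using ts by auto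
      then show "c T * int (bc \<pi> n (U - T)) = c T * int (bc \<tau> n (U - T))" using H by simp
    qed
    have "c T0 * int (bc \<pi> n (Tstar m n)) = c T0 * int (bc \<tau> n (Tstar m n))"
      using F split[of \<pi>] split[of \<tau>] rest by simp
    moreover have "c T0 \<noteq> 0" unfolding c_def by simp
    ultimately show ?thesis using True by simp
  qed
qed

theorem theorem5p4:
  fixes m :: nat and \<pi> \<tau> :: "nat list"
  assumes "\<pi> \<in> Sym m" and "\<tau> \<in> Sym m"
    and "non_overlapping \<pi>" and "non_overlapping \<tau>"
    and "c_Wilf_equiv \<pi> \<tau>"
  shows "super_strongly_c_Wilf_equiv \<pi> \<tau>"
  unfolding super_strongly_c_Wilf_equiv_def
proof (intro allI)
  fix n S
  have len: "length \<tau> = length \<pi>" using Sym_D assms(1,2) by metis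
  define U where "U = {1..n+1-length \<pi>}"
  show "a_count \<pi> n S = a_count \<tau> n S"
  proof (cases "S \<subseteq> U")
    case False then show ?thesis using a_out[of S n \<pi>] a_out[of S n \<tau>] len unfolding U_def by simp
  next
    case True
    have S: "U - S \<subseteq> U" by auto
    have "int (a_count \<pi> n (U - (U - S))) = int (a_count \<tau> n (U - (U - S)))"
      using mobius[of "U - S" n \<pi>] mobius[of "U - S" n \<tau>] len
        main_bc[OF assms(3,4) len assms(5)] unfolding U_def by simp
    moreover have "U - (U - S) = S" using True by auto
    ultimately show ?thesis by simp
  qed
qed

end
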